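(* For every positive integer $n$, the number of edges of $OD(\mathbb{Z}_n)$ is $$|E(OD(\mathbb{Z}_n))|=\frac12\sum_{m\mid n}\Big(m+\sum_{\lambda\mid\frac{n}{m}}\phi(\lambda m)-2\phi(m)\Big)\phi(m),$$ where $\phi$ is Euler's totient function and sums run over positive divisors.
   Context: $\mathbb{Z}_n$ is the additive cyclic group of integers modulo $n$. For a finite group $G$, $o(x)$ denotes the order of $x\in G$. The order-divisor graph $OD(G)$ is the simple undirected graph with vertex set $G$, in which two distinct vertices $x,y$ are adjacent if and only if $o(x)\neq o(y)$ and either $o(x)\mid o(y)$ or $o(y)\mid o(x)$. *)

theory Defs
  imports "HOL-Algebra.Algebra" "HOL-Number_Theory.Number_Theory"
begin

definition od_edges :: "('a, 'b) monoid_scheme \<Rightarrow> 'a set set" where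
  "od_edges G = {{x, y} | x y. x \<in> carrier G \<and> y \<in> carrier G \<and> x \<noteq> y \<and>
      group.ord G x \<noteq> group.ord G y \<and>
      (group.ord G x dvd group.ord G y \<or> group.ord G y dvd group.ord G x)}"

end

theory Submission
  imports Defs
begin

lemma regroup:
  fixes C :: "'a set" and f :: "'a \<Rightarrow> nat" and g :: "nat \<Rightarrow> real"
  assumes n: "n > 0" and fin: "finite C" and fd: "\<forall>x\<in>C. f x dvd n"
    and fib: "\<And>d. d dvd n \<Longrightarrow> card {x\<in>C. f x = d} = totient d"
  shows "(\<Sum>x\<in>C. g (f x)) = (\<Sum>d | d dvd n. real (totient d) * g d)"
proof -
  have fT: "finite {d. d dvd n}" using n by simp
  have "(\<Sum>x\<in>C. g (f x)) = (\<Sum>d | d dvd n. \<Sum>x\<in>{x. x\<in>C \<and> f x = d}. g (f x))"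
    by (rule sym, rule sum.group[OF fin fT]) (use fd in auto)
  also have "\<dots> = (\<Sum>d | d dvd n. real (totient d) * g d)"
  proof (rule sum.cong[OF refl])
    fix d assume "d \<in> {d. d dvd n}"
    hence "card {x\<in>C. f x = d} = totient d" using fib by simp
    moreover have "(\<Sum>x\<in>{x. x\<in>C \<and> f x = d}. g (f x)) = (\<Sum>x\<in>{x. x\<in>C \<and> f x = d}. g d)"
      by (rule sum.cong) auto
    ultimately show "(\<Sum>x\<in>{x. x\<in>C \<and> f x = d}. g (f x)) = real (totient d) * g d"
      by simp
  qed
  finally show ?thesis .
qed

lemma card_dvd_m:
  fixes C :: "'a set" and f :: "'a \<Rightarrow> nat"
  assumes n: "n > 0" and fin: "finite C" and fd: "\<forall>x\<in>C. f x dvd n"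
    and fib: "\<And>d. d dvd n \<Longrightarrow> card {x\<in>C. f x = d} = totient d"
    and m: "m dvd n"
  shows "card {y\<in>C. f y dvd m} = m"
proof -
  have m0: "m > 0" using m n by (auto intro: Nat.gr0I)
  have fT: "finite {d. d dvd m}" using m0 by simp
  have "card {y\<in>C. f y dvd m} = (\<Sum>d | d dvd m. card {x. x\<in>{y\<in>C. f y dvd m} \<and> f x = d})"
    using sum.group[OF _ fT, of "{y\<in>C. f y dvd m}" f "\<lambda>_. 1::nat"] fin
    by (simp add: image_subset_iff)
  also have "\<dots> = (\<Sum>d | d dvd m. totient d)"
  proof (rule sum.cong[OF refl])
    fix d assume d: "d \<in> {d. d dvd m}"
    have "{x. x\<in>{y\<in>C. f y dvd m} \<and> f x = d} = {x\<in>C. f x = d}" using d by auto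
    then show "card {x. x\<in>{y\<in>C. f y dvd m} \<and> f x = d} = totient d"
      using fib d m dvd_trans by auto
  qed
  also have "\<dots> = m" by (rule totient_divisor_sum)
  finally show ?thesis .
qed

lemma card_m_dvd:
  fixes C :: "'a set" and f :: "'a \<Rightarrow> nat"
  assumes n: "n > 0" and fin: "finite C" and fd: "\<forall>x\<in>C. f x dvd n"
    and fib: "\<And>d. d dvd n \<Longrightarrow> card {x\<in>C. f x = d} = totient d"
    and m: "m dvd n"
  shows "card {y\<in>C. m dvd f y} = (\<Sum>l | l dvd (n div m). totient (l * m))"
proof -
  have m0: "m > 0" using m n by (auto intro: Nat.gr0I)
  have fT: "finite {d. d dvd n \<and> m dvd d}" using n by simp
  have "card {y\<in>C. m dvd f y} = (\<Sum>d | d dvd n \<and> m dvd d. card {x. x\<in>{y\<in>C. m dvd f y} \<and> f x = d})"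
    using sum.group[OF _ fT, of "{y\<in>C. m dvd f y}" f "\<lambda>_. 1::nat"] fin fd
    by (simp add: image_subset_iff)
  also have "\<dots> = (\<Sum>d | d dvd n \<and> m dvd d. totient d)"
  proof (rule sum.cong[OF refl])
    fix d assume d: "d \<in> {d. d dvd n \<and> m dvd d}"
    have "{x. x\<in>{y\<in>C. m dvd f y} \<and> f x = d} = {x\<in>C. f x = d}" using d by auto
    then show "card {x. x\<in>{y\<in>C. m dvd f y} \<and> f x = d} = totient d"
      using fib d by auto
  qed
  also have "\<dots> = (\<Sum>l | l dvd (n div m). totient (l * m))"
  proof -
    have bij: "bij_betw (\<lambda>l. l * m) {l. l dvd (n div m)} {d. d dvd n \<and> m dvd d}"
    proof (rule bij_betw_imageI)
      show "inj_on (\<lambda>l. l * m) {l. l dvd n div m}" using m0 by (auto simp: inj_on_def)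
      show "(\<lambda>l. l * m) ` {l. l dvd n div m} = {d. d dvd n \<and> m dvd d}"
      proof (intro equalityI subsetI)
        fix d assume "d \<in> (\<lambda>l. l * m) ` {l. l dvd n div m}"
        then obtain l where "d = l * m" "l dvd n div m" by auto
        then show "d \<in> {d. d dvd n \<and> m dvd d}" using m
          by (auto simp: dvd_div_iff_mult m0)
      next
        fix d assume "d \<in> {d. d dvd n \<and> m dvd d}"
        then obtain l where l: "d = m * l" "m*l dvd n" by auto
        then have "l dvd n div m" using m0 m by (auto simp: dvd_div_iff_mult mult.commute)
        then show "d \<in> (\<lambda>l. l * m) ` {l. l dvd n div m}" using l by (auto simp: mult.commute)
      qed
    qed
    show ?thesis using sum.reindex_bij_betw[OF bij, of totient] by simp
  qed
  finally show ?thesis .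
qed


lemma abstract_edges:
  fixes C :: "'a set" and f :: "'a \<Rightarrow> nat"
  assumes n: "n > 0" and fin: "finite C" and fd: "\<forall>x\<in>C. f x dvd n"
    and fib: "\<And>d. d dvd n \<Longrightarrow> card {x\<in>C. f x = d} = totient d"
  shows "real (card {{x, y} | x y. x \<in> C \<and> y \<in> C \<and> x \<noteq> y \<and> f x \<noteq> f y \<and>
      (f x dvd f y \<or> f y dvd f x)}) =
    (1/2) * (\<Sum>m | m dvd n.
       (real m + (\<Sum>l | l dvd (n div m). real (totient (l * m))) - 2 * real (totient m))
       * real (totient m))"
proof -
  let ?E = "{{x, y} | x y. x \<in> C \<and> y \<in> C \<and> x \<noteq> y \<and> f x \<noteq> f y \<and>
      (f x dvd f y \<or> f y dvd f x)}"
  define P where "P = (SIGMA x:C. {y\<in>C. f x dvd f y \<and> f x \<noteq> f y})"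
  define Q where "Q = (SIGMA x:C. {y\<in>C. f y dvd f x \<and> f x \<noteq> f y})"
  have EP: "?E = (\<lambda>(x,y). {x,y}) ` P"
  proof (intro equalityI subsetI)
    fix e assume "e \<in> ?E"
    then obtain x y where e: "e = {x,y}" "x \<in> C" "y \<in> C" "f x \<noteq> f y" "f x dvd f y \<or> f y dvd f x"
      by blast
    show "e \<in> (\<lambda>(x,y). {x,y}) ` P"
    proof (cases "f x dvd f y")
      case True
      then show ?thesis using e by (auto simp: P_def image_iff intro!: bexI[of _ "(x,y)"])
    next
      case False
      then have "(y,x) \<in> P" using e by (auto simp: P_def)
      moreover have "e = {y,x}" using e by auto
      ultimately show ?thesis by force
    qed
  next
    fix e assume "e \<in> (\<lambda>(x,y). {x,y}) ` P"
    then obtain x y where "(x,y) \<in> P" "e = {x,y}" by auto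
    then show "e \<in> ?E" unfolding P_def by auto
  qed
  have injP: "inj_on (\<lambda>(x,y). {x,y}) P"
  proof (rule inj_onI, clarify)
    fix x y x' y' assume a: "(x,y) \<in> P" "(x',y') \<in> P" "{x,y} = {x',y'}"
    show "x = x' \<and> y = y'"
    proof (cases "x = x'")
      case True then show ?thesis using a(3) by (auto simp: doubleton_eq_iff)
    next
      case False
      then have "x = y'" "y = x'" using a(3) by (auto simp: doubleton_eq_iff)
      then show ?thesis using a(1,2) unfolding P_def by (auto dest: dvd_antisym)
    qed
  qed
  have cE: "card ?E = card P" using EP card_image[OF injP] by simp
  have PQ: "Q = (\<lambda>(x,y). (y,x)) ` P" unfolding P_def Q_def by auto
  have cQ: "card Q = card P" unfolding PQ by (rule card_image) (auto simp: inj_on_def)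
  have fin2: "\<And>x. finite {y\<in>C. f x dvd f y \<and> f x \<noteq> f y}" "\<And>x. finite {y\<in>C. f y dvd f x \<and> f x \<noteq> f y}"
    using fin by auto
  have cP: "real (card P) = (\<Sum>x\<in>C. real (card {y\<in>C. f x dvd f y}) - real (totient (f x)))"
  proof -
    have "real (card P) = (\<Sum>x\<in>C. real (card {y\<in>C. f x dvd f y \<and> f x \<noteq> f y}))"
      unfolding P_def using fin fin2 by simp
    also have "\<dots> = (\<Sum>x\<in>C. real (card {y\<in>C. f x dvd f y}) - real (totient (f x)))"
    proof (rule sum.cong[OF refl])
      fix x assume x: "x \<in> C"
      have "{y\<in>C. f x dvd f y \<and> f x \<noteq> f y} = {y\<in>C. f x dvd f y} - {y\<in>C. f y = f x}" by auto
      moreover have "card {y\<in>C. f y = f x} = totient (f x)" using fib fd x by auto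
      moreover have "{y\<in>C. f y = f x} \<subseteq> {y\<in>C. f x dvd f y}" by auto
      ultimately show "real (card {y\<in>C. f x dvd f y \<and> f x \<noteq> f y}) = real (card {y\<in>C. f x dvd f y}) - real (totient (f x))"
        using fin by (metis (no_types, lifting) card_Diff_subset card_mono finite_subset mem_Collect_eq of_nat_diff subsetI)
    qed
    finally show ?thesis .
  qed
  have cQ': "real (card Q) = (\<Sum>x\<in>C. real (card {y\<in>C. f y dvd f x}) - real (totient (f x)))"
  proof -
    have "real (card Q) = (\<Sum>x\<in>C. real (card {y\<in>C. f y dvd f x \<and> f x \<noteq> f y}))"
      unfolding Q_def using fin fin2 by simp
    also have "\<dots> = (\<Sum>x\<in>C. real (card {y\<in>C. f y dvd f x}) - real (totient (f x)))"
    proof (rule sum.cong[OF refl])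
      fix x assume x: "x \<in> C"
      have "{y\<in>C. f y dvd f x \<and> f x \<noteq> f y} = {y\<in>C. f y dvd f x} - {y\<in>C. f y = f x}" by auto
      moreover have "card {y\<in>C. f y = f x} = totient (f x)" using fib fd x by auto
      moreover have "{y\<in>C. f y = f x} \<subseteq> {y\<in>C. f y dvd f x}" by auto
      ultimately show "real (card {y\<in>C. f y dvd f x \<and> f x \<noteq> f y}) = real (card {y\<in>C. f y dvd f x}) - real (totient (f x))"
        using fin by (metis (no_types, lifting) card_Diff_subset card_mono finite_subset mem_Collect_eq of_nat_diff subsetI)
    qed
    finally show ?thesis .
  qed
  have "real (card ?E) = (1/2) * (real (card Q) + real (card P))" using cE cQ by simp
  also have "\<dots> = (1/2) * (\<Sum>x\<in>C. (\<lambda>m. (real m + (\<Sum>l | l dvd (n div m). real (totient (l * m))) - 2 * real (totient m))) (f x))"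
  proof -
    have "real (card Q) + real (card P) = (\<Sum>x\<in>C. (real (card {y\<in>C. f y dvd f x}) - real (totient (f x))) + (real (card {y\<in>C. f x dvd f y}) - real (totient (f x))))"
      unfolding cQ' cP sum.distrib ..
    also have "\<dots> = (\<Sum>x\<in>C. (\<lambda>m. (real m + (\<Sum>l | l dvd (n div m). real (totient (l * m))) - 2 * real (totient m))) (f x))"
    proof (rule sum.cong[OF refl])
      fix x assume x: "x \<in> C"
      have "card {y\<in>C. f y dvd f x} = f x" using card_dvd_m[OF n fin fd fib] fd x by auto
      moreover have "card {y\<in>C. f x dvd f y} = (\<Sum>l | l dvd (n div f x). totient (l * f x))"
        using card_m_dvd[OF n fin fd fib] fd x by auto
      ultimately show "(real (card {y\<in>C. f y dvd f x}) - real (totient (f x))) + (real (card {y\<in>C. f x dvd f y}) - real (totient (f x)))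
        = (\<lambda>m. (real m + (\<Sum>l | l dvd (n div m). real (totient (l * m))) - 2 * real (totient m))) (f x)"
        by simp
    qed
    finally show ?thesis by simp
  qed
  also have "\<dots> = (1/2) * (\<Sum>m | m dvd n.
       (real m + (\<Sum>l | l dvd (n div m). real (totient (l * m))) - 2 * real (totient m))
       * real (totient m))"
  proof -
    define h where "h = (\<lambda>m. (real m + (\<Sum>l | l dvd (n div m). real (totient (l * m))) - 2 * real (totient m)))"
    have "(\<Sum>x\<in>C. h (f x)) = (\<Sum>m | m dvd n. real (totient m) * h m)"
      by (rule regroup[OF n fin fd fib])
    also have "\<dots> = (\<Sum>m | m dvd n. h m * real (totient m))"
      by (rule sum.cong[OF refl]) simp
    finally show ?thesis unfolding h_def by simp
  qed
  finally show ?thesis .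
qed


lemma dvd_mult_iff_div_gcd:
  fixes n k m :: nat
  assumes "n > 0"
  shows "n dvd m * k \<longleftrightarrow> (n div gcd n k) dvd m"
proof (cases "k = 0")
  case True then show ?thesis using assms by simp
next
  case False
  then show ?thesis
    by (simp add: div_dvd_iff_mult gcd_mult_distrib_nat mult.commute)
qed

lemma ord_zmod:
  fixes n k :: nat
  assumes n: "n > 0" and k: "k < n"
  shows "group.ord (integer_mod_group n) (int k) = n div gcd n k"
proof -
  interpret G: group "integer_mod_group n" by simp
  have c: "int k \<in> carrier (integer_mod_group n)" using n k by (simp add: carrier_integer_mod_group)
  show ?thesis
  proof (subst G.ord_unique[OF c], intro allI)
    fix m :: nat
    have "(int m * int k) mod int n = 0 \<longleftrightarrow> n dvd m * k"
      by (metis of_nat_mult dvd_eq_mod_eq_0 of_nat_dvd_iff)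
    then show "(int k [^]\<^bsub>integer_mod_group n\<^esub> m = \<one>\<^bsub>integer_mod_group n\<^esub>) = (n div gcd n k dvd m)"
      using dvd_mult_iff_div_gcd[OF n] by simp
  qed
qed

lemma div_div_eq_dvd:
  fixes n d :: nat
  assumes "n > 0" "d dvd n"
  shows "n div (n div d) = d"
proof -
  obtain q where q: "n = d * q" using assms(2) by (elim dvdE)
  then have "d > 0" "q > 0" using assms(1) by auto
  then show ?thesis using q by simp
qed

lemma fib_zmod:
  fixes n d :: nat
  assumes n: "n > 0" and d: "d dvd n"
  shows "card {x\<in>carrier (integer_mod_group n). group.ord (integer_mod_group n) x = d} = totient d"
proof -
  let ?o = "group.ord (integer_mod_group n)"
  have eqv: "n div gcd n k = d \<longleftrightarrow> gcd k n = n div d" for k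
  proof -
    have g0: "gcd n k > 0" using n by simp
    have gd: "gcd n k dvd n" by simp
    show ?thesis
    proof
      assume "n div gcd n k = d"
      then show "gcd k n = n div d" using g0 gd div_div_eq_dvd[OF n gd] by (simp add: gcd.commute)
    next
      assume "gcd k n = n div d"
      then show "n div gcd n k = d" using div_div_eq_dvd[OF n d] by (simp add: gcd.commute)
    qed
  qed
  have S: "{x\<in>carrier (integer_mod_group n). ?o x = d} = int ` {k\<in>{0..<n}. gcd k n = n div d}"
  proof (intro equalityI subsetI)
    fix x assume x: "x \<in> {x\<in>carrier (integer_mod_group n). ?o x = d}"
    then have x0: "0 \<le> x" "x < int n" using n by (auto simp: carrier_integer_mod_group)
    then obtain k where k: "x = int k" "k < n" by (metis nonneg_int_cases of_nat_less_iff)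
    then have "n div gcd n k = d" using x ord_zmod[OF n k(2)] by simp
    then show "x \<in> int ` {k\<in>{0..<n}. gcd k n = n div d}" using k eqv by auto
  next
    fix x assume "x \<in> int ` {k\<in>{0..<n}. gcd k n = n div d}"
    then obtain k where k: "x = int k" "k < n" "gcd k n = n div d" by auto
    then show "x \<in> {x\<in>carrier (integer_mod_group n). ?o x = d}"
      using ord_zmod[OF n k(2)] eqv n by (auto simp: carrier_integer_mod_group)
  qed
  have "card {k\<in>{0..<n}. gcd k n = n div d} = card {k\<in>{0<..n}. gcd k n = n div d}"
  proof (rule bij_betw_same_card[of "\<lambda>k. if k = 0 then n else k"], rule bij_betw_imageI)
    show "inj_on (\<lambda>k. if k = 0 then n else k) {k \<in> {0..<n}. gcd k n = n div d}"
      by (auto simp: inj_on_def)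
    show "(\<lambda>k. if k = 0 then n else k) ` {k \<in> {0..<n}. gcd k n = n div d} = {k \<in> {0<..n}. gcd k n = n div d}"
    proof (intro equalityI subsetI)
      fix y assume "y \<in> (\<lambda>k. if k = 0 then n else k) ` {k \<in> {0..<n}. gcd k n = n div d}"
      then show "y \<in> {k \<in> {0<..n}. gcd k n = n div d}" using n by (auto split: if_splits)
    next
      fix y assume y: "y \<in> {k \<in> {0<..n}. gcd k n = n div d}"
      show "y \<in> (\<lambda>k. if k = 0 then n else k) ` {k \<in> {0..<n}. gcd k n = n div d}"
      proof (cases "y = n")
        case True
        then show ?thesis using y n by (auto simp: image_iff intro!: bexI[of _ 0])
      next
        case False
        then show ?thesis using y by (auto simp: image_iff intro!: bexI[of _ y])
      qed
    qed
  qed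
  also have "\<dots> = totient (n div (n div d))"
    by (rule card_gcd_eq_totient[OF n]) (use d in auto)
  also have "\<dots> = totient d" using div_div_eq_dvd[OF n d] by simp
  finally show ?thesis unfolding S by (simp add: card_image)
qed

theorem mainTheorem15:
  fixes n :: nat
  assumes "n > 0"
  shows "real (card (od_edges (integer_mod_group n))) =
    (1/2) * (\<Sum>m | m dvd n.
       (real m + (\<Sum>l | l dvd (n div m). real (totient (l * m))) - 2 * real (totient m))
       * real (totient m))"
proof -
  have fin: "finite (carrier (integer_mod_group n))" using assms by (simp add: carrier_integer_mod_group)
  have fd: "\<forall>x\<in>carrier (integer_mod_group n). group.ord (integer_mod_group n) x dvd n"
  proof
    fix x assume x: "x \<in> carrier (integer_mod_group n)"
    then have x0: "0 \<le> x" "x < int n" using assms by (auto simp: carrier_integer_mod_group)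
    then obtain k where k: "x = int k" "k < n" by (metis nonneg_int_cases of_nat_less_iff)
    show "group.ord (integer_mod_group n) x dvd n" using ord_zmod[OF assms k(2)] k(1) by (metis gcd_dvd1 dvd_mult_div_cancel dvd_triv_right)
  qed
  show ?thesis
    unfolding od_edges_def
    by (rule abstract_edges[OF assms fin fd fib_zmod[OF assms]])
qed

end
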